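(* For all odd integers $n\ge1$ and real numbers $a\ge1$, $x\in(0,\pi)$, we have $S^*_{n,a}(x)\ge\sin(x)$. Equality holds if and only if $n=1$.
   Context: For a real number $a$ and integers $0\le m$, $\binom{m+a}{m}=\frac{(a+1)(a+2)\cdots(a+m)}{m!}$ (equal to $1$ when $m=0$). For an integer $n\ge1$, $S^*_{n,a}(x)=\sum_{1\le j\le n,\ j\text{ odd}}\binom{n+a-j}{n-j}\sin(jx)$. *)

theory Defs
  imports Complex_Main
begin

text \<open>binom(m+a, m) = (a+1)(a+2)...(a+m)/m!, for real a and natural m.\<close>
definition binomr :: "nat \<Rightarrow> real \<Rightarrow> real" where
  "binomr m a = pochhammer (a + 1) m / fact m"

definition Sstar :: "nat \<Rightarrow> real \<Rightarrow> real \<Rightarrow> real" where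
  "Sstar n a x = (\<Sum>j\<in>{j\<in>{1..n}. odd j}. binomr (n - j) a * sin (real j * x))"

end

theory Submission
  imports Defs
begin

lemma binomr_Suc: "binomr (Suc m) a = binomr m a * (a + 1 + real m) / (real m + 1)"
  unfolding binomr_def by (simp add: pochhammer_Suc fact_Suc field_simps)

lemma binomr_ge: "a \<ge> 1 \<Longrightarrow> binomr m a \<ge> real m + 1"
proof (induction m)
  case 0 then show ?case by (simp add: binomr_def)
next
  case (Suc m)
  have "binomr (Suc m) a = binomr m a * (a + 1 + real m) / (real m + 1)" by (rule binomr_Suc)
  also have "\<dots> \<ge> (real m + 1) * (real m + 2) / (real m + 1)"
    using Suc by (intro divide_right_mono mult_mono) auto
  finally show ?case by simp
qed

lemma binomr_step: "a \<ge> 1 \<Longrightarrow> binomr (Suc m) a \<ge> binomr m a + 1"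
proof -
  assume a: "a \<ge> 1"
  have g: "binomr m a \<ge> real m + 1" using binomr_ge[OF a] .
  have "binomr (Suc m) a = binomr m a + binomr m a * a / (real m + 1)"
    by (simp add: binomr_Suc field_simps)
  moreover have "binomr m a * a / (real m + 1) \<ge> 1"
  proof -
    have "binomr m a * a \<ge> (real m + 1) * 1" using g a by (intro mult_mono) auto
    then show ?thesis by (simp add: field_simps)
  qed
  ultimately show ?thesis by simp
qed

lemma abel:
  fixes b T :: "nat \<Rightarrow> real"
  shows
  "(\<Sum>k<Suc M. b k * (T (Suc k) - T k)) =
     b M * T (Suc M) + (\<Sum>k<M. (b k - b (Suc k)) * T (Suc k)) - b 0 * T 0"
proof (induction M)
  case 0 then show ?case by (simp add: right_diff_distrib)
next
  case (Suc M)
  have "(\<Sum>k<Suc (Suc M). b k * (T (Suc k) - T k)) = (\<Sum>k<Suc M. b k * (T (Suc k) - T k)) + b (Suc M) * (T (Suc (Suc M)) - T (Suc M))"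
    by simp
  also have "\<dots> = b M * T (Suc M) + (\<Sum>k<M. (b k - b (Suc k)) * T (Suc k)) - b 0 * T 0 + b (Suc M) * (T (Suc (Suc M)) - T (Suc M))"
    using Suc by simp
  also have "\<dots> = b (Suc M) * T (Suc (Suc M)) + (\<Sum>k<Suc M. (b k - b (Suc k)) * T (Suc k)) - b 0 * T 0"
    by (simp add: algebra_simps)
  finally show ?case .
qed

lemma sin_sq_diff: "sin (real (Suc k) * x) ^ 2 - sin (real k * x) ^ 2 = sin x * sin (real (2*k+1) * x)"
proof -
  define y where "y = real k * x"
  have A: "real (Suc k) * x = y + x" by (simp add: algebra_simps y_def)
  have B: "real (2*k+1) * x = 2 * y + x" by (simp add: algebra_simps y_def)
  have c: "cos x ^ 2 = 1 - sin x ^ 2" by (simp add: cos_squared_eq)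
  have "sin (y + x) ^ 2 - sin y ^ 2 = sin x * sin (2 * y + x)"
  proof -
    have e: "cos x * cos x + sin x * sin x = 1" using sin_cos_squared_add[of x] by (simp add: power2_eq_square)
    have e2: "cos x * (cos x * z) + sin x * (sin x * z) = z" for z
    proof -
      have "cos x * (cos x * z) + sin x * (sin x * z) = z * (cos x * cos x + sin x * sin x)"
        by (simp only: distrib_left mult.commute mult.left_commute)
      also have "\<dots> = z" by (metis e mult.right_neutral)
      finally show ?thesis .
    qed
    show ?thesis
      unfolding sin_add sin_double cos_double by (simp add: power2_eq_square algebra_simps e2)
  qed
  then show ?thesis unfolding A B y_def .
qed

lemma sstar_reindex:
  "Sstar (2*M+1) a x = (\<Sum>k<Suc M. binomr (2*(M-k)) a * sin (real (2*k+1) * x))"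
proof -
  have S: "{j\<in>{1..2*M+1}. odd j} = (\<lambda>k. 2*k+1) ` {..<Suc M}"
  proof (intro set_eqI iffI)
    fix j assume "j \<in> {j\<in>{1..2*M+1}. odd j}"
    then obtain k where "j = 2*k+1" "k < Suc M" by (auto elim!: oddE)
    then show "j \<in> (\<lambda>k. 2*k+1) ` {..<Suc M}" by auto
  qed auto
  have I: "inj_on (\<lambda>k::nat. 2*k+1) {..<Suc M}" by (auto simp: inj_on_def)
  show ?thesis unfolding Sstar_def S sum.reindex[OF I]
    by (intro sum.cong) (auto simp: algebra_simps)
qed

theorem theorem3p5:
  fixes n :: nat and a x :: real
  assumes "odd n" and "n \<ge> 1" and "a \<ge> 1" and "0 < x" and "x < pi"
  shows "Sstar n a x \<ge> sin x \<and> (Sstar n a x = sin x \<longleftrightarrow> n = 1)"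
proof -
  obtain M where n: "n = 2*M+1" using assms(1) by (auto elim!: oddE)
  have sx: "sin x > 0" using assms by (simp add: sin_gt_zero)
  define b where "b k = binomr (2*(M-k)) a - (if k = 0 then 1 else 0)" for k
  define T where "T k = sin (real k * x) ^ 2" for k
  have T0: "T 0 = 0" by (simp add: T_def)
  have Tnn: "T k \<ge> 0" for k by (simp add: T_def)
  have c0: "binomr 0 a = 1" by (simp add: binomr_def)
  have key: "sin x * (Sstar n a x - sin x) = (\<Sum>k<Suc M. b k * (T (Suc k) - T k))"
  proof -
    have "Sstar n a x - sin x = (\<Sum>k<Suc M. b k * sin (real (2*k+1) * x))"
    proof -
      have "(\<Sum>k<Suc M. b k * sin (real (2*k+1) * x)) =
         (\<Sum>k<Suc M. binomr (2*(M-k)) a * sin (real (2*k+1) * x)) - (\<Sum>k<Suc M. (if k = 0 then sin (real (2*k+1) * x) else 0))"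
        unfolding b_def sum_subtractf[symmetric] by (intro sum.cong) (auto simp: algebra_simps)
      also have "(\<Sum>k<Suc M. (if k = 0 then sin (real (2*k+1) * x) else 0)) = sin x"
        by (subst sum.delta) auto
      finally show ?thesis unfolding n sstar_reindex by simp
    qed
    have TT: "T (Suc k) - T k = sin x * sin (real (2*k+1) * x)" for k
      unfolding T_def by (rule sin_sq_diff)
    show ?thesis unfolding TT \<open>Sstar n a x - sin x = _\<close> sum_distrib_left
      by (simp add: algebra_simps)
  qed
  have bmono: "b k - b (Suc k) \<ge> 0" if "k < M" for k
  proof -
    define d where "d = M - Suc k"
    have d: "M - k = Suc d" using that unfolding d_def by arith
    have e: "M - Suc k = d" by (simp add: d_def)
    have "binomr (Suc (Suc (2*d))) a \<ge> binomr (2*d) a + 2"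
      using binomr_step[OF assms(3), of "Suc (2*d)"] binomr_step[OF assms(3), of "2*d"] by simp
    then show ?thesis unfolding b_def d e by (simp add: mult_2)
  qed
  have bM: "b M \<ge> 0" by (simp add: b_def c0)
  have eq: "sin x * (Sstar n a x - sin x) = b M * T (Suc M) + (\<Sum>k<M. (b k - b (Suc k)) * T (Suc k))"
    using key abel[of b T M] T0 by simp
  have nn: "sin x * (Sstar n a x - sin x) \<ge> 0"
    unfolding eq using bM Tnn bmono by (intro add_nonneg_nonneg sum_nonneg mult_nonneg_nonneg) auto
  have ge: "Sstar n a x \<ge> sin x"
    using nn sx by (simp add: zero_le_mult_iff)
  show ?thesis
  proof (cases "M = 0")
    case True
    then have "Sstar n a x = sin x" using n sstar_reindex[of 0 a x] c0 by simp
    then show ?thesis using True n by simp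
  next
    case False
    have pos0: "(b 0 - b (Suc 0)) * T (Suc 0) > 0"
    proof -
      obtain d where d: "M = Suc d" using False by (cases M) auto
      have "binomr (Suc (Suc (2*d))) a \<ge> binomr (2*d) a + 2"
        using binomr_step[OF assms(3), of "Suc (2*d)"] binomr_step[OF assms(3), of "2*d"] by simp
      then have "b 0 - b (Suc 0) > 0" unfolding b_def d by (simp add: mult_2)
      moreover have "T (Suc 0) > 0" using sx by (simp add: T_def)
      ultimately show ?thesis by simp
    qed
    have "(b 0 - b (Suc 0)) * T (Suc 0) \<le> (\<Sum>k<M. (b k - b (Suc k)) * T (Suc k))"
    proof (rule member_le_sum)
      show "0 \<in> {..<M}" using False by simp
      show "finite {..<M}" by simp
      fix k assume "k \<in> {..<M} - {0}"
      then have "k < M" by simp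
      then show "0 \<le> (b k - b (Suc k)) * T (Suc k)" using bmono Tnn by simp
    qed
    moreover have "b M * T (Suc M) \<ge> 0" using bM Tnn by simp
    ultimately have "sin x * (Sstar n a x - sin x) > 0"
      unfolding eq using pos0 by linarith
    then have "Sstar n a x \<noteq> sin x" by auto
    then show ?thesis using ge False n by simp
  qed
qed

end
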